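(* Let $\mathcal{A}\subset\mathbb{Z}$ be a finite alphabet, let $G=(V,E)$ be a finite directed graph with edge labelling $\ell:E\to\mathcal{A}$, assume the matrix $M=\sum_{a\in\mathcal{A}}M_a$ is primitive, let $\beta>1$ be a Pisot number and let $\nu=(\phi^+)_*(\mu^+)$ as described in the context. If $x\in\mathbb{R}$ satisfies $\nu(\{x\})>0$, then the set $(\phi^+)^{-1}(\{x\})$ is open in $\mathcal{K}^+$.
   Context: For $a\in\mathcal{A}$, $M_a$ is the $V\times V$ matrix with $(M_a)_{ij}=1$ if $(i,j)\in E$ and $\ell((i,j))=a$, and $0$ otherwise. By Perron–Frobenius, $M$ has a dominant eigenvalue $\lambda>0$ with positive left eigenvector $\mathbf v_L$ and right eigenvector $\mathbf v_R$, normalised by $\mathbf v_L^{\mathsf T}\mathbf v_R=1$. $\mathcal{K}^+\subseteq\mathcal{A}^{\mathbb{N}}$ is the set of sequences $(\ell(e_k))_{k\ge1}$ for infinite paths $e_1e_2\ldots$ in $G$ (terminal vertex of $e_j$ equals initial vertex of $e_{j+1}$), with the topology generated by cylinder sets $[\varepsilon_1,\ldots,\varepsilon_k]=\{x\in\mathcal{K}^+: x_1=\varepsilon_1,\ldots,x_k=\varepsilon_k\}$. $\mu^+$ is the Borel probability measure on $\mathcal{K}^+$ with $\mu^+([\varepsilon_1,\ldots,\varepsilon_k])=\lambda^{-k}\mathbf v_L^{\mathsf T}M_{\varepsilon_1}\cdots M_{\varepsilon_k}\mathbf v_R$. A Pisot number is an algebraic integer $>1$ all of whose other Galois conjugates have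 modulus $<1$ (integers $\ge2$ included). $\phi^+:\mathcal{K}^+\to\mathbb{R}$, $(x_k)\mapsto\sum_{k\ge1}x_k\beta^{-k}$, and $\nu(A)=\mu^+((\phi^+)^{-1}(A))$. *)

theory Defs
  imports "HOL-Analysis.Analysis" "HOL-Computational_Algebra.Polynomial" "HOL-Probability.Probability"
begin

text \<open>Pisot number: an algebraic integer greater than 1 all of whose other Galois
  conjugates have modulus less than 1. The conjugates are the complex roots of the
  minimal polynomial, i.e. of the monic irreducible integer polynomial vanishing at it.\<close>
definition pisot :: "real \<Rightarrow> bool" where
  "pisot \<beta> \<longleftrightarrow> \<beta> > 1 \<and>
     (\<exists>p :: int poly. lead_coeff p = 1 \<and> irreducible p \<and> poly (map_poly of_int p) \<beta> = 0 \<and>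
        (\<forall>z::complex. poly (map_poly of_int p) z = 0 \<and> z \<noteq> complex_of_real \<beta> \<longrightarrow> cmod z < 1))"

definition Mlab :: "('v::finite \<times> 'v) set \<Rightarrow> ('v \<times> 'v \<Rightarrow> int) \<Rightarrow> int \<Rightarrow> real^'v^'v" where
  "Mlab E lab a = (\<chi> i j. if (i, j) \<in> E \<and> lab (i, j) = a then 1 else 0)"

definition Mtot :: "int set \<Rightarrow> ('v::finite \<times> 'v) set \<Rightarrow> ('v \<times> 'v \<Rightarrow> int) \<Rightarrow> real^'v^'v" where
  "Mtot A E lab = (\<Sum>a\<in>A. Mlab E lab a)"

definition matpow :: "real^'n^'n \<Rightarrow> nat \<Rightarrow> real^'n^'n" where
  "matpow M k = (((**) M) ^^ k) (mat 1)"

definition primitive_matrix :: "real^'n^'n \<Rightarrow> bool" where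
  "primitive_matrix M \<longleftrightarrow> (\<forall>i j. M $ i $ j \<ge> 0) \<and>
     (\<exists>k>0. \<forall>i j. matpow M k $ i $ j > 0)"

definition Mword :: "('v::finite \<times> 'v) set \<Rightarrow> ('v \<times> 'v \<Rightarrow> int) \<Rightarrow> int list \<Rightarrow> real^'v^'v" where
  "Mword E lab ws = foldr (\<lambda>a P. Mlab E lab a ** P) ws (mat 1)"

text \<open>K^+: label sequences of infinite paths. Sequences are indexed from 0,
  i.e. s 0 is x_1.\<close>
definition Kplus :: "('v \<times> 'v) set \<Rightarrow> ('v \<times> 'v \<Rightarrow> int) \<Rightarrow> (nat \<Rightarrow> int) set" where
  "Kplus E lab = {s. \<exists>p :: nat \<Rightarrow> 'v. \<forall>n. (p n, p (Suc n)) \<in> E \<and> s n = lab (p n, p (Suc n))}"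

definition cyl :: "(nat \<Rightarrow> int) set \<Rightarrow> int list \<Rightarrow> (nat \<Rightarrow> int) set" where
  "cyl K ws = {s \<in> K. \<forall>i<length ws. s i = ws ! i}"

definition Ktop :: "(nat \<Rightarrow> int) set \<Rightarrow> (nat \<Rightarrow> int) topology" where
  "Ktop K = topology_generated_by (range (cyl K))"

definition phi :: "real \<Rightarrow> (nat \<Rightarrow> int) \<Rightarrow> real" where
  "phi \<beta> s = (\<Sum>n. real_of_int (s n) / \<beta> ^ (Suc n))"

end

theory Submission
  imports Defs
begin

fun walk :: "('v \<times> 'v) set \<Rightarrow> ('v \<times> 'v \<Rightarrow> int) \<Rightarrow> 'v \<Rightarrow> int list \<Rightarrow> 'v \<Rightarrow> bool" where
  "walk E lab i [] j = (i = j)"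
| "walk E lab i (a # ws) j = (\<exists>k. (i, k) \<in> E \<and> lab (i, k) = a \<and> walk E lab k ws j)"

lemma Mword_Cons: "Mword E lab (a # ws) = Mlab E lab a ** Mword E lab ws"
  by (simp add: Mword_def)

lemma Mword_Nil: "Mword E lab [] = mat 1"
  by (simp add: Mword_def)

lemma Mword_append: "Mword E lab (u @ v) = Mword E lab u ** Mword E lab v"
  by (induction u) (auto simp: Mword_Nil Mword_Cons matrix_mul_assoc matrix_mul_lid)

lemma Mlab_entry: "Mlab E lab a $ i $ j = (if (i, j) \<in> E \<and> lab (i, j) = a then 1 else 0)"
  by (simp add: Mlab_def)

lemma Mword_entry:
  fixes E :: "('v::finite \<times> 'v) set"
  shows "0 \<le> Mword E lab ws $ i $ j \<and> (walk E lab i ws j \<longrightarrow> 1 \<le> Mword E lab ws $ i $ j)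
         \<and> (\<not> walk E lab i ws j \<longrightarrow> Mword E lab ws $ i $ j = 0)"
proof (induction ws arbitrary: i)
  case Nil
  then show ?case by (simp add: Mword_Nil mat_def)
next
  case (Cons a ws)
  have eq: "Mword E lab (a # ws) $ i $ j = (\<Sum>k\<in>UNIV. Mlab E lab a $ i $ k * Mword E lab ws $ k $ j)"
    by (simp add: Mword_Cons matrix_matrix_mult_def)
  have nn: "\<And>k. 0 \<le> Mlab E lab a $ i $ k * Mword E lab ws $ k $ j"
    using Cons.IH by (simp add: Mlab_entry)
  have p1: "0 \<le> Mword E lab (a # ws) $ i $ j" unfolding eq by (rule sum_nonneg) (use nn in auto)
  have p2: "1 \<le> Mword E lab (a # ws) $ i $ j" if "walk E lab i (a # ws) j"
  proof -
    from that obtain k where k: "(i, k) \<in> E" "lab (i, k) = a" "walk E lab k ws j" by auto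
    have "1 \<le> Mlab E lab a $ i $ k * Mword E lab ws $ k $ j"
      using k Cons.IH[of k] by (simp add: Mlab_entry)
    also have "\<dots> \<le> (\<Sum>k\<in>UNIV. Mlab E lab a $ i $ k * Mword E lab ws $ k $ j)"
      by (rule member_le_sum) (use nn in auto)
    finally show ?thesis unfolding eq .
  qed
  have p3: "Mword E lab (a # ws) $ i $ j = 0" if "\<not> walk E lab i (a # ws) j"
  proof -
    have "\<And>k. Mlab E lab a $ i $ k * Mword E lab ws $ k $ j = 0"
      using that Cons.IH by (auto simp: Mlab_entry)
    then show ?thesis unfolding eq by (intro sum.neutral) blast
  qed
  show ?case using p1 p2 p3 by blast
qed

definition Kv :: "('v \<times> 'v) set \<Rightarrow> ('v \<times> 'v \<Rightarrow> int) \<Rightarrow> 'v \<Rightarrow> (nat \<Rightarrow> int) set" where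
  "Kv E lab j = {s. \<exists>p. p 0 = j \<and> (\<forall>n. (p n, p (Suc n)) \<in> E \<and> s n = lab (p n, p (Suc n)))}"

definition conc :: "int list \<Rightarrow> (nat \<Rightarrow> int) \<Rightarrow> nat \<Rightarrow> int" where
  "conc w t = (\<lambda>m. if m < length w then w ! m else t (m - length w))"

definition sh :: "nat \<Rightarrow> (nat \<Rightarrow> int) \<Rightarrow> nat \<Rightarrow> int" where
  "sh n t = (\<lambda>m. t (m + n))"

definition Pw :: "real \<Rightarrow> int list \<Rightarrow> real" where
  "Pw \<beta> w = (\<Sum>i<length w. real_of_int (w ! i) / \<beta> ^ Suc i)"

lemma Kv_sub_K: "Kv E lab j \<subseteq> Kplus E lab"
  by (auto simp: Kv_def Kplus_def)

lemma K_Kv: "s \<in> Kplus E lab \<Longrightarrow> \<exists>j. s \<in> Kv E lab j"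
  by (auto simp: Kv_def Kplus_def)

lemma walk_conc: "walk E lab i w j \<Longrightarrow> t \<in> Kv E lab j \<Longrightarrow> conc w t \<in> Kv E lab i"
proof (induction w arbitrary: i)
  case Nil
  then show ?case by (simp add: conc_def)
next
  case (Cons a w)
  from Cons.prems(1) obtain k where k: "(i, k) \<in> E" "lab (i, k) = a" "walk E lab k w j" by auto
  from Cons.IH[OF k(3) Cons.prems(2)] obtain p where p: "p 0 = k"
    "\<forall>n. (p n, p (Suc n)) \<in> E \<and> conc w t n = lab (p n, p (Suc n))"
    by (auto simp: Kv_def)
  define q where "q n = (case n of 0 \<Rightarrow> i | Suc m \<Rightarrow> p m)" for n
  have "conc (a # w) t n = lab (q n, q (Suc n)) \<and> (q n, q (Suc n)) \<in> E" for n
  proof (cases n)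
    case 0
    then show ?thesis using k p by (simp add: q_def conc_def)
  next
    case (Suc m)
    have "conc (a # w) t n = conc w t m" by (simp add: conc_def Suc)
    then show ?thesis using p by (simp add: q_def Suc)
  qed
  moreover have "q 0 = i" by (simp add: q_def)
  ultimately show ?case unfolding Kv_def by blast
qed

lemma prefix_walk_aux:
  assumes "\<forall>n. (p n, p (Suc n)) \<in> E \<and> t n = lab (p n, p (Suc n))"
  shows "walk E lab (p m) (map (\<lambda>i. t (i + m)) [0..<N]) (p (m + N))"
proof (induction N arbitrary: m)
  case 0
  then show ?case by simp
next
  case (Suc N)
  have "map (\<lambda>i. t (i + m)) [0..<Suc N] = t m # map (\<lambda>i. t (i + Suc m)) [0..<N]"
    by (subst map_upt_Suc) simp
  moreover have "walk E lab (p (Suc m)) (map (\<lambda>i. t (i + Suc m)) [0..<N]) (p (m + Suc N))"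
    using Suc[of "Suc m"] by simp
  ultimately show ?case using assms by auto
qed

lemma prefix_walk: "t \<in> Kv E lab j \<Longrightarrow> \<exists>k. walk E lab j (map t [0..<N]) k"
proof -
  assume "t \<in> Kv E lab j"
  then obtain p where p: "p 0 = j" "\<forall>n. (p n, p (Suc n)) \<in> E \<and> t n = lab (p n, p (Suc n))"
    by (auto simp: Kv_def)
  show ?thesis using prefix_walk_aux[OF p(2), of 0 N] p(1) by auto
qed

lemma sh_K: "t \<in> Kplus E lab \<Longrightarrow> sh n t \<in> Kplus E lab"
proof -
  assume "t \<in> Kplus E lab"
  then obtain p where "\<forall>m. (p m, p (Suc m)) \<in> E \<and> t m = lab (p m, p (Suc m))" by (auto simp: Kplus_def)
  then have "\<forall>m. ((\<lambda>m. p (m + n)) m, (\<lambda>m. p (m + n)) (Suc m)) \<in> E \<and> sh n t m = lab ((\<lambda>m. p (m + n)) m, (\<lambda>m. p (m + n)) (Suc m))"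
    by (simp add: sh_def)
  then show ?thesis unfolding Kplus_def by (intro CollectI exI[of _ "\<lambda>m. p (m + n)"]) simp
qed

lemma cyl_conc: "t \<in> cyl K w \<Longrightarrow> t = conc w (sh (length w) t)"
  by (auto simp: cyl_def conc_def sh_def)

lemma walk_letters: "walk E lab i w j \<Longrightarrow> set w \<subseteq> lab ` E"
  by (induction w arbitrary: i) auto

lemma K_letters: "t \<in> Kplus E lab \<Longrightarrow> t n \<in> lab ` E"
  by (auto simp: Kplus_def)

lemma K_bound:
  fixes E :: "('v::finite \<times> 'v) set"
  assumes "t \<in> Kplus E lab"
  shows "\<bar>real_of_int (t n)\<bar> \<le> (\<Sum>e\<in>E. \<bar>real_of_int (lab e)\<bar>)"
proof -
  obtain e where e: "e \<in> E" "t n = lab e" using K_letters[OF assms, of n] by auto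
  have "\<bar>real_of_int (lab e)\<bar> \<le> (\<Sum>e\<in>E. \<bar>real_of_int (lab e)\<bar>)"
    by (rule member_le_sum) (use e in auto)
  then show ?thesis using e by simp
qed

lemma phi_summable:
  assumes b: "\<beta> > 1" and bd: "\<forall>n. \<bar>real_of_int (s n)\<bar> \<le> B"
  shows "summable (\<lambda>n. real_of_int (s n) / \<beta> ^ Suc n)"
    and "\<bar>phi \<beta> s\<bar> \<le> B / (\<beta> - 1)"
proof -
  define g where "g n = (B / \<beta>) * (1 / \<beta>) ^ n" for n
  have bb: "norm (1 / \<beta>) < 1" using b by simp
  have sg: "summable g" unfolding g_def by (intro summable_mult summable_geometric bb)
  have le: "norm (real_of_int (s n) / \<beta> ^ Suc n) \<le> g n" for n
  proof -
    have "norm (real_of_int (s n) / \<beta> ^ Suc n) = \<bar>real_of_int (s n)\<bar> / \<beta> ^ Suc n"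
      using b by (simp add: abs_divide)
    also have "\<dots> \<le> B / \<beta> ^ Suc n" using bd b by (intro divide_right_mono) auto
    also have "\<dots> = g n" by (simp add: g_def power_divide field_simps)
    finally show ?thesis .
  qed
  show sm: "summable (\<lambda>n. real_of_int (s n) / \<beta> ^ Suc n)"
    by (rule summable_comparison_test[OF _ sg]) (use le in auto)
  have sn: "summable (\<lambda>n. norm (real_of_int (s n) / \<beta> ^ Suc n))"
    by (rule summable_comparison_test[OF _ sg]) (use le in auto)
  have "\<bar>phi \<beta> s\<bar> \<le> (\<Sum>n. norm (real_of_int (s n) / \<beta> ^ Suc n))"
    unfolding phi_def using summable_norm[OF sn] by simp
  also have "\<dots> \<le> suminf g" by (rule suminf_le[OF le sn sg])
  also have "suminf g = (B / \<beta>) * (1 / (1 - 1 / \<beta>))"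
    unfolding g_def suminf_mult[OF summable_geometric[OF bb]] suminf_geometric[OF bb] by simp
  also have "\<dots> = B / (\<beta> - 1)" using b by (simp add: field_simps)
  finally show "\<bar>phi \<beta> s\<bar> \<le> B / (\<beta> - 1)" .
qed

lemma phi_conc:
  assumes b: "\<beta> > 1" and bd: "\<forall>n. \<bar>real_of_int (t n)\<bar> \<le> B"
  shows "phi \<beta> (conc w t) = Pw \<beta> w + phi \<beta> t / \<beta> ^ length w"
proof -
  define f where "f n = real_of_int (conc w t n) / \<beta> ^ Suc n" for n
  define k where "k = length w"
  have sh: "f (n + k) = real_of_int (t n) / \<beta> ^ Suc n / \<beta> ^ k" for n
    by (simp add: f_def conc_def k_def power_add field_simps)
  have st: "summable (\<lambda>n. real_of_int (t n) / \<beta> ^ Suc n)" using phi_summable(1)[OF b bd] .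
  have s1: "summable (\<lambda>n. f (n + k))" unfolding sh by (intro summable_divide st)
  have sf: "summable f" using s1 summable_iff_shift by blast
  have "phi \<beta> (conc w t) = suminf f" unfolding phi_def
    by (rule arg_cong[where f=suminf]) (simp add: fun_eq_iff f_def)
  also have "\<dots> = (\<Sum>n. f (n + k)) + (\<Sum>i<k. f i)" by (rule suminf_split_initial_segment[OF sf])
  also have "(\<Sum>n. f (n + k)) = phi \<beta> t / \<beta> ^ k" unfolding sh phi_def by (rule suminf_divide[OF st])
  also have "(\<Sum>i<k. f i) = Pw \<beta> w" unfolding Pw_def k_def f_def conc_def by simp
  finally show ?thesis by (simp add: k_def)
qed

lemma phi_close:
  assumes b: "\<beta> > 1" and bs: "\<forall>n. \<bar>real_of_int (s n)\<bar> \<le> B" and bt: "\<forall>n. \<bar>real_of_int (t n)\<bar> \<le> B"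
    and eq: "\<forall>i<N. s i = t i"
  shows "\<bar>phi \<beta> s - phi \<beta> t\<bar> \<le> 2 * B / (\<beta> - 1) / \<beta> ^ N"
proof -
  define w where "w = map s [0..<N]"
  have ws: "s = conc w (sh N s)" by (auto simp: conc_def sh_def w_def)
  have wt: "t = conc w (sh N t)" using eq by (auto simp: conc_def sh_def w_def)
  have bs': "\<forall>n. \<bar>real_of_int (sh N s n)\<bar> \<le> B" using bs by (simp add: sh_def)
  have bt': "\<forall>n. \<bar>real_of_int (sh N t n)\<bar> \<le> B" using bt by (simp add: sh_def)
  have "phi \<beta> s - phi \<beta> t = (phi \<beta> (sh N s) - phi \<beta> (sh N t)) / \<beta> ^ N"
    using phi_conc[OF b bs', of w] phi_conc[OF b bt', of w] ws wt
    by (simp add: w_def diff_divide_distrib)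
  moreover have "\<bar>phi \<beta> (sh N s) - phi \<beta> (sh N t)\<bar> \<le> 2 * B / (\<beta> - 1)"
    using phi_summable(2)[OF b bs'] phi_summable(2)[OF b bt'] by linarith
  then have "\<bar>phi \<beta> (sh N s) - phi \<beta> (sh N t)\<bar> / \<beta> ^ N \<le> 2 * B / (\<beta> - 1) / \<beta> ^ N"
    by (rule divide_right_mono) (use b in simp)
  ultimately show ?thesis using b by (simp add: abs_divide)
qed

lemma mv_sum_right: "finite I \<Longrightarrow> (M::real^'n^'m) *v (\<Sum>i\<in>I. f i) = (\<Sum>i\<in>I. M *v f i)"
  by (induction I rule: finite_induct) (auto simp: matrix_vector_right_distrib)

lemma mv_sum_left: "finite I \<Longrightarrow> (\<Sum>i\<in>I. f i) *v (x::real^'n) = (\<Sum>i\<in>I. (f i :: real^'n^'m) *v x)"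
  by (induction I rule: finite_induct) (auto simp: matrix_vector_mult_add_rdistrib)

definition Ln :: "int set \<Rightarrow> nat \<Rightarrow> int list set" where
  "Ln A n = {xs. set xs \<subseteq> A \<and> length xs = n}"

lemma Ln_finite: "finite A \<Longrightarrow> finite (Ln A n)"
  unfolding Ln_def by (rule finite_lists_length_eq)

lemma Ln_0: "Ln A 0 = {[]}"
  by (auto simp: Ln_def)

lemma Ln_Suc: "Ln A (Suc n) = (\<lambda>(a, v). a # v) ` (A \<times> Ln A n)"
  by (auto simp: Ln_def length_Suc_conv image_iff)

lemma Ln_add: "Ln A (n + m) = (\<lambda>(u, v). u @ v) ` (Ln A n \<times> Ln A m)"
proof
  show "Ln A (n + m) \<subseteq> (\<lambda>(u, v). u @ v) ` (Ln A n \<times> Ln A m)"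
  proof
    fix w assume w: "w \<in> Ln A (n + m)"
    have "take n w \<in> Ln A n" "drop n w \<in> Ln A m" using w
      by (auto simp: Ln_def dest: in_set_takeD in_set_dropD)
    moreover have "w = take n w @ drop n w" by simp
    ultimately show "w \<in> (\<lambda>(u, v). u @ v) ` (Ln A n \<times> Ln A m)"
      by (intro image_eqI[where x="(take n w, drop n w)"]) auto
  qed
qed (auto simp: Ln_def)

lemma sum_Ln_add:
  assumes "finite A"
  shows "(\<Sum>w\<in>Ln A (n + m). g w) = (\<Sum>u\<in>Ln A n. \<Sum>v\<in>Ln A m. g (u @ v))"
proof -
  have inj: "inj_on (\<lambda>(u, v). u @ v) (Ln A n \<times> Ln A m)"
    by (auto simp: inj_on_def Ln_def)
  have "(\<Sum>w\<in>Ln A (n + m). g w) = (\<Sum>p\<in>Ln A n \<times> Ln A m. g (fst p @ snd p))"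
    unfolding Ln_add by (subst sum.reindex[OF inj]) (simp add: case_prod_beta)
  also have "\<dots> = (\<Sum>u\<in>Ln A n. \<Sum>v\<in>Ln A m. g (u @ v))"
    by (subst sum.cartesian_product) (simp add: case_prod_beta)
  finally show ?thesis .
qed

lemma Mtot_walk:
  fixes E :: "('v::finite \<times> 'v) set"
  assumes "Mtot A E lab $ i $ l \<noteq> 0"
  shows "\<exists>a. (i, l) \<in> E \<and> lab (i, l) = a"
proof -
  have "Mtot A E lab $ i $ l = (\<Sum>a\<in>A. Mlab E lab a $ i $ l)" by (simp add: Mtot_def)
  then obtain a where "Mlab E lab a $ i $ l \<noteq> 0" using assms sum.not_neutral_contains_not_neutral by metis
  then show ?thesis by (auto simp: Mlab_entry split: if_splits)
qed

lemma matpow_walk: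
  fixes E :: "('v::finite \<times> 'v) set"
  shows "matpow (Mtot A E lab) k $ i $ j \<noteq> 0 \<Longrightarrow> \<exists>ws. walk E lab i ws j"
proof (induction k arbitrary: i)
  case 0
  then show ?case by (auto simp: matpow_def mat_def intro: exI[of _ "[]"] split: if_splits)
next
  case (Suc k)
  have "matpow (Mtot A E lab) (Suc k) = Mtot A E lab ** matpow (Mtot A E lab) k"
    by (simp add: matpow_def)
  then have "(\<Sum>l\<in>UNIV. Mtot A E lab $ i $ l * matpow (Mtot A E lab) k $ l $ j) \<noteq> 0"
    using Suc.prems by (simp add: matrix_matrix_mult_def)
  then obtain l where "Mtot A E lab $ i $ l * matpow (Mtot A E lab) k $ l $ j \<noteq> 0"
    using sum.not_neutral_contains_not_neutral by blast
  then have l: "Mtot A E lab $ i $ l \<noteq> 0" "matpow (Mtot A E lab) k $ l $ j \<noteq> 0" by auto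
  obtain a where a: "(i, l) \<in> E" "lab (i, l) = a" using Mtot_walk[OF l(1)] by blast
  obtain ws where "walk E lab l ws j" using Suc.IH[OF l(2)] by blast
  then have "walk E lab i (a # ws) j" using a by auto
  then show ?case by blast
qed

lemma Mword_sum:
  fixes E :: "('v::finite \<times> 'v) set"
  assumes finA: "finite A" and ev: "Mtot A E lab *v vR = lam *\<^sub>R vR"
  shows "(\<Sum>v\<in>Ln A N. Mword E lab v *v vR) = lam ^ N *\<^sub>R vR"
proof (induction N)
  case 0
  then show ?case by (simp add: Ln_0 Mword_Nil)
next
  case (Suc N)
  have inj: "inj_on (\<lambda>(a, v). a # v) (A \<times> Ln A N)" by (auto simp: inj_on_def)
  have "(\<Sum>v\<in>Ln A (Suc N). Mword E lab v *v vR)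
      = (\<Sum>p\<in>A \<times> Ln A N. Mlab E lab (fst p) *v (Mword E lab (snd p) *v vR))"
    unfolding Ln_Suc by (subst sum.reindex[OF inj]) (simp add: case_prod_beta Mword_Cons matrix_vector_mul_assoc)
  also have "\<dots> = (\<Sum>a\<in>A. \<Sum>v\<in>Ln A N. Mlab E lab a *v (Mword E lab v *v vR))"
    by (subst sum.cartesian_product) (simp add: case_prod_beta)
  also have "\<dots> = (\<Sum>a\<in>A. Mlab E lab a *v (lam ^ N *\<^sub>R vR))"
    using Suc.IH by (simp add: mv_sum_right[OF Ln_finite[OF finA], symmetric])
  also have "\<dots> = lam ^ N *\<^sub>R (Mtot A E lab *v vR)"
    by (simp add: Mtot_def mv_sum_left[OF finA] matrix_vector_mult_scaleR scaleR_sum_right)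
  also have "\<dots> = lam ^ Suc N *\<^sub>R vR" using ev by simp
  finally show ?case .
qed

definition muc :: "('v::finite \<times> 'v) set \<Rightarrow> ('v \<times> 'v \<Rightarrow> int) \<Rightarrow> real \<Rightarrow> real^'v \<Rightarrow> real^'v \<Rightarrow> int list \<Rightarrow> real" where
  "muc E lab lam vL vR u = vL \<bullet> (Mword E lab u *v vR) / lam ^ length u"

lemma muc_sum:
  fixes E :: "('v::finite \<times> 'v) set"
  assumes finA: "finite A" and ev: "Mtot A E lab *v vR = lam *\<^sub>R vR" and lam: "lam > 0"
  shows "(\<Sum>v\<in>Ln A N. muc E lab lam vL vR (u @ v)) = muc E lab lam vL vR u"
proof -
  have len: "\<And>v. v \<in> Ln A N \<Longrightarrow> length (u @ v) = length u + N" by (simp add: Ln_def)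
  have "(\<Sum>v\<in>Ln A N. muc E lab lam vL vR (u @ v))
      = (\<Sum>v\<in>Ln A N. vL \<bullet> (Mword E lab u *v (Mword E lab v *v vR))) / lam ^ (length u + N)"
    unfolding muc_def sum_divide_distrib
    by (rule sum.cong) (auto simp: Ln_def Mword_append matrix_vector_mul_assoc)
  also have "(\<Sum>v\<in>Ln A N. vL \<bullet> (Mword E lab u *v (Mword E lab v *v vR)))
      = vL \<bullet> (Mword E lab u *v (\<Sum>v\<in>Ln A N. Mword E lab v *v vR))"
    by (simp add: mv_sum_right[OF Ln_finite[OF finA]] inner_sum_right)
  also have "\<dots> = lam ^ N * (vL \<bullet> (Mword E lab u *v vR))"
    by (simp add: Mword_sum[OF finA ev] matrix_vector_mult_scaleR)
  finally show ?thesis using lam by (simp add: muc_def power_add)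
qed

lemma Mword_nonneg:
  fixes E :: "('v::finite \<times> 'v) set"
  shows "0 \<le> Mword E lab ws $ i $ j"
  using Mword_entry by blast

lemma inner_vec_real: "(x::real^'n) \<bullet> y = (\<Sum>i\<in>UNIV. x $ i * y $ i)"
  by (simp add: inner_vec_def)

lemma Mword_vec_nonneg:
  fixes E :: "('v::finite \<times> 'v) set"
  assumes "\<forall>i. vR $ i \<ge> 0"
  shows "(Mword E lab v *v vR) $ l \<ge> 0"
  unfolding matrix_vector_mult_def using assms Mword_nonneg
  by (auto intro!: sum_nonneg mult_nonneg_nonneg)

lemma vecMword_nonneg:
  fixes E :: "('v::finite \<times> 'v) set"
  assumes "\<forall>i. vL $ i \<ge> 0"
  shows "(vL v* Mword E lab v) $ l \<ge> 0"
  unfolding vector_matrix_mult_def using assms Mword_nonneg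
  by (auto intro!: sum_nonneg mult_nonneg_nonneg)

lemma muc_nonneg:
  fixes E :: "('v::finite \<times> 'v) set"
  assumes "\<forall>i. vL $ i \<ge> 0" "\<forall>i. vR $ i \<ge> 0" "lam > 0"
  shows "muc E lab lam vL vR u \<ge> 0"
  unfolding muc_def inner_vec_real using assms Mword_vec_nonneg[OF assms(2)]
  by (auto intro!: divide_nonneg_pos sum_nonneg mult_nonneg_nonneg)

lemma muc_lower:
  fixes E :: "('v::finite \<times> 'v) set"
  assumes vL: "\<forall>i. vL $ i \<ge> 0" and r0: "r0 > 0" and vRb: "\<forall>i. r0 \<le> vR $ i \<and> vR $ i \<le> r1"
    and lam: "lam > 0"
    and jmax: "\<forall>l. (vL v* Mword E lab u) $ l \<le> (vL v* Mword E lab u) $ j"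
    and w: "walk E lab j v0 k"
  shows "r0 / (lam ^ length v0 * real CARD('v) * r1) * muc E lab lam vL vR u
         \<le> muc E lab lam vL vR (u @ v0)"
proof -
  define a where "a = vL v* Mword E lab u"
  define z where "z = Mword E lab v0 *v vR"
  have vR0: "\<forall>i. vR $ i \<ge> 0"
  proof
    fix i show "vR $ i \<ge> 0" using vRb[rule_format, of i] r0 by linarith
  qed
  have r1: "r1 > 0" using vRb[rule_format, of undefined] r0 by linarith
  have an: "\<And>l. a $ l \<ge> 0" unfolding a_def by (rule vecMword_nonneg[OF vL])
  have zn: "\<And>l. z $ l \<ge> 0" unfolding z_def by (rule Mword_vec_nonneg[OF vR0])
  have zj: "z $ j \<ge> r0"
  proof -
    have "r0 \<le> Mword E lab v0 $ j $ k * vR $ k"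
      using Mword_entry[of E lab v0 j k] w vRb r0
      by (metis mult_1_left mult_right_mono order_trans vR0)
    also have "\<dots> \<le> (\<Sum>l\<in>UNIV. Mword E lab v0 $ j $ l * vR $ l)"
      by (rule member_le_sum) (use Mword_nonneg vR0 in \<open>auto intro!: mult_nonneg_nonneg\<close>)
    finally show ?thesis by (simp add: z_def matrix_vector_mult_def)
  qed
  have num1: "vL \<bullet> (Mword E lab (u @ v0) *v vR) = a \<bullet> z"
    by (simp add: a_def z_def dot_lmul_matrix Mword_append matrix_vector_mul_assoc)
  have "a $ j * r0 \<le> a $ j * z $ j" using an zj by (simp add: mult_left_mono)
  also have "\<dots> \<le> a \<bullet> z" unfolding inner_vec_real
    by (rule member_le_sum) (use an zn in \<open>auto intro: mult_nonneg_nonneg\<close>)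
  finally have lowz: "a $ j * r0 \<le> a \<bullet> z" .
  have num2: "vL \<bullet> (Mword E lab u *v vR) = a \<bullet> vR" by (simp add: a_def dot_lmul_matrix)
  have "a \<bullet> vR \<le> (\<Sum>l\<in>(UNIV::'v set). a $ j * r1)" unfolding inner_vec_real
  proof (rule sum_mono)
    fix l :: 'v
    show "a $ l * vR $ l \<le> a $ j * r1"
      using an[of l] vRb[rule_format, of l] jmax[rule_format, of l] vR0 r1
      unfolding a_def by (intro mult_mono) auto
  qed
  then have upv: "a \<bullet> vR \<le> real CARD('v) * a $ j * r1" by simp
  define n where "n = length u"
  define N where "N = length v0"
  have "r0 / (lam ^ N * real CARD('v) * r1) * muc E lab lam vL vR u
        = r0 / (lam ^ N * real CARD('v) * r1) * (a \<bullet> vR) / lam ^ n"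
    by (simp add: muc_def num2 n_def)
  also have "\<dots> \<le> r0 / (lam ^ N * real CARD('v) * r1) * (real CARD('v) * a $ j * r1) / lam ^ n"
    using upv lam r0 r1 by (intro divide_right_mono mult_left_mono) auto
  also have "\<dots> = a $ j * r0 / lam ^ (n + N)" using r1 lam by (simp add: field_simps power_add)
  also have "\<dots> \<le> (a \<bullet> z) / lam ^ (n + N)" using lowz lam by (simp add: divide_right_mono)
  also have "\<dots> = muc E lab lam vL vR (u @ v0)" by (simp add: muc_def num1 n_def N_def)
  finally show ?thesis by (simp add: N_def)
qed

lemma exists_N:
  fixes \<beta> C \<delta> :: real
  assumes b: "\<beta> > 1" and d: "\<delta> > 0"
  shows "\<exists>N. C / \<beta> ^ N < \<delta>"
proof -
  obtain N where N: "C / \<delta> < \<beta> ^ N" using real_arch_pow[OF b] by blast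
  have bp: "\<beta> ^ N > 0" using b by simp
  have "C < \<delta> * \<beta> ^ N" using N d by (simp add: divide_less_eq mult.commute)
  then have "C / \<beta> ^ N < \<delta>" using bp by (simp add: divide_less_eq)
  then show ?thesis by blast
qed

lemma cyl_open: "openin (Ktop K) (cyl K w)"
  unfolding Ktop_def openin_topology_generated_by_iff
  by (rule generate_topology_on.Basis) simp

lemma open_case:
  fixes E :: "('v::finite \<times> 'v) set"
  assumes b: "\<beta> > 1" and bd: "\<forall>t\<in>Kplus E lab. \<forall>n. \<bar>real_of_int (t n)\<bar> \<le> B"
    and fin: "finite (phi \<beta> ` Kplus E lab)"
  shows "openin (Ktop (Kplus E lab)) {s \<in> Kplus E lab. phi \<beta> s = x}"
proof -
  define K where "K = Kplus E lab"
  define F where "F = {s \<in> K. phi \<beta> s = x}"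
  obtain \<delta> where d: "\<delta> > 0" "\<forall>y\<in>phi \<beta> ` K. y \<noteq> x \<longrightarrow> \<delta> \<le> dist x y"
    using finite_set_avoid[OF fin, of x] unfolding K_def by blast
  obtain N where N: "2 * B / (\<beta> - 1) / \<beta> ^ N < \<delta>" using exists_N[OF b d(1)] by blast
  have cov: "\<exists>C\<in>range (cyl K). s \<in> C \<and> C \<subseteq> F" if s: "s \<in> F" for s
  proof -
    have "cyl K (map s [0..<N]) \<subseteq> F"
    proof
      fix t assume t: "t \<in> cyl K (map s [0..<N])"
      then have tK: "t \<in> K" and eq: "\<forall>i<N. s i = t i" by (auto simp: cyl_def)
      have sK: "s \<in> K" using s by (simp add: F_def)
      have "\<bar>phi \<beta> s - phi \<beta> t\<bar> \<le> 2 * B / (\<beta> - 1) / \<beta> ^ N"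
        using phi_close[OF b _ _ eq] bd sK tK unfolding K_def by blast
      then have "dist x (phi \<beta> t) < \<delta>" using s N by (simp add: F_def dist_real_def)
      then have "phi \<beta> t = x" using d(2) tK by force
      then show "t \<in> F" using tK by (simp add: F_def)
    qed
    moreover have "s \<in> cyl K (map s [0..<N])" using s by (simp add: cyl_def F_def)
    ultimately show ?thesis by blast
  qed
  have "F = \<Union>{C \<in> range (cyl K). C \<subseteq> F}" using cov by blast
  moreover have "generate_topology_on (range (cyl K)) (\<Union>{C \<in> range (cyl K). C \<subseteq> F})"
    by (rule generate_topology_on.UN) (auto intro: generate_topology_on.Basis)
  ultimately show ?thesis unfolding Ktop_def openin_topology_generated_by_iff K_def F_def by simp
qed

lemma spread:
  fixes E :: "('v::finite \<times> 'v) set"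
  assumes prim: "primitive_matrix (Mtot A E lab)" and b: "\<beta> > 1"
    and bd: "\<forall>t\<in>Kplus E lab. \<forall>n. \<bar>real_of_int (t n)\<bar> \<le> B"
    and t: "t1 \<in> Kv E lab j0" "t2 \<in> Kv E lab j0" "phi \<beta> t1 \<noteq> phi \<beta> t2"
  shows "\<exists>s1\<in>Kv E lab i. \<exists>s2\<in>Kv E lab i. phi \<beta> s1 \<noteq> phi \<beta> s2"
proof -
  obtain k where "\<forall>i j. matpow (Mtot A E lab) k $ i $ j > 0" using prim by (auto simp: primitive_matrix_def)
  then have "matpow (Mtot A E lab) k $ i $ j0 \<noteq> 0" by (metis less_irrefl)
  then obtain ws where ws: "walk E lab i ws j0" using matpow_walk by blast
  have b1: "\<forall>n. \<bar>real_of_int (t1 n)\<bar> \<le> B" using bd t(1) Kv_sub_K[of E lab j0] by blast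
  have b2: "\<forall>n. \<bar>real_of_int (t2 n)\<bar> \<le> B" using bd t(2) Kv_sub_K[of E lab j0] by blast
  have "phi \<beta> (conc ws t1) \<noteq> phi \<beta> (conc ws t2)"
    using phi_conc[OF b b1, of ws] phi_conc[OF b b2, of ws] t(3) b by simp
  then show ?thesis using walk_conc[OF ws t(1)] walk_conc[OF ws t(2)] by blast
qed

lemma claimA:
  fixes E :: "('v::finite \<times> 'v) set"
  assumes b: "\<beta> > 1" and bd: "\<forall>t\<in>Kplus E lab. \<forall>n. \<bar>real_of_int (t n)\<bar> \<le> B"
    and t: "t1 \<in> Kv E lab j" "t2 \<in> Kv E lab j"
    and N: "4 * B / (\<beta> - 1) / \<beta> ^ N < \<bar>phi \<beta> t1 - phi \<beta> t2\<bar>"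
  shows "\<exists>v0 k. length v0 = N \<and> walk E lab j v0 k \<and>
           \<not> (\<exists>t'\<in>Kplus E lab. (\<forall>i<N. t' i = v0 ! i) \<and> phi \<beta> t' = y)"
proof (rule ccontr)
  assume "\<not> ?thesis"
  then have H: "\<And>v0 k. length v0 = N \<Longrightarrow> walk E lab j v0 k \<Longrightarrow>
           \<exists>t'\<in>Kplus E lab. (\<forall>i<N. t' i = v0 ! i) \<and> phi \<beta> t' = y" by blast
  have close: "\<bar>phi \<beta> t - y\<bar> \<le> 2 * B / (\<beta> - 1) / \<beta> ^ N" if tj: "t \<in> Kv E lab j" for t
  proof -
    obtain k where wk: "walk E lab j (map t [0..<N]) k" using prefix_walk[OF tj] by blast
    obtain t' where t': "t' \<in> Kplus E lab" "\<forall>i<N. t' i = map t [0..<N] ! i" "phi \<beta> t' = y"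
      using H[OF _ wk] by auto
    have eq: "\<forall>i<N. t i = t' i" using t'(2) by simp
    have tK: "t \<in> Kplus E lab" using tj Kv_sub_K[of E lab j] by blast
    show ?thesis using phi_close[OF b _ _ eq] bd tK t' by blast
  qed
  have "\<bar>phi \<beta> t1 - phi \<beta> t2\<bar> \<le> 4 * B / (\<beta> - 1) / \<beta> ^ N"
  proof -
    have "4 * B / (\<beta> - 1) / \<beta> ^ N = 2 * B / (\<beta> - 1) / \<beta> ^ N + 2 * B / (\<beta> - 1) / \<beta> ^ N"
      by (simp add: field_simps)
    then show ?thesis using close[OF t(1)] close[OF t(2)] by linarith
  qed
  then show False using N by linarith
qed

lemma null_case:
  fixes E :: "('v::finite \<times> 'v) set" and \<mu> :: "(nat \<Rightarrow> int) measure"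
  assumes finA: "finite A" and labA: "lab ` E \<subseteq> A" and lam: "lam > 0"
    and ev: "Mtot A E lab *v vR = lam *\<^sub>R vR"
    and vL_pos: "\<forall>i. vL $ i > 0" and vR_pos: "\<forall>i. vR $ i > 0" and norm: "vL \<bullet> vR = 1"
    and b: "\<beta> > 1" and prob: "prob_space \<mu>"
    and sets_mu: "sets \<mu> = sigma_sets (Kplus E lab) {U. openin (Ktop (Kplus E lab)) U}"
    and cyl_mu: "\<forall>ws. measure \<mu> (cyl (Kplus E lab) ws) = vL \<bullet> (Mword E lab ws *v vR) / lam ^ length ws"
    and bd: "\<forall>t\<in>Kplus E lab. \<forall>n. \<bar>real_of_int (t n)\<bar> \<le> B"
    and alln: "\<forall>j. \<exists>t1\<in>Kv E lab j. \<exists>t2\<in>Kv E lab j. phi \<beta> t1 \<noteq> phi \<beta> t2"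
  shows "measure \<mu> {s \<in> Kplus E lab. phi \<beta> s = x} \<le> 0"
proof -
  interpret prob_space \<mu> by (rule prob)
  define K where "K = Kplus E lab"
  define F where "F = {s \<in> K. phi \<beta> s = x}"
  define mc where "mc = muc E lab lam vL vR"
  obtain T1 T2 where T: "\<forall>j. T1 j \<in> Kv E lab j \<and> T2 j \<in> Kv E lab j \<and> phi \<beta> (T1 j) \<noteq> phi \<beta> (T2 j)"
    using alln by metis
  define d where "d = Min (range (\<lambda>j. \<bar>phi \<beta> (T1 j) - phi \<beta> (T2 j)\<bar>))"
  have dpos: "d > 0" unfolding d_def using T by (auto simp: Min_gr_iff)
  have dle: "\<forall>j. d \<le> \<bar>phi \<beta> (T1 j) - phi \<beta> (T2 j)\<bar>" unfolding d_def by (auto intro: Min_le)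
  obtain N where N: "4 * B / (\<beta> - 1) / \<beta> ^ N < d" using exists_N[OF b dpos] by blast
  have cA: "\<exists>v0 k. length v0 = N \<and> walk E lab j v0 k \<and>
           \<not> (\<exists>t'\<in>K. (\<forall>i<N. t' i = v0 ! i) \<and> phi \<beta> t' = y)" for j y
  proof -
    have "4 * B / (\<beta> - 1) / \<beta> ^ N < \<bar>phi \<beta> (T1 j) - phi \<beta> (T2 j)\<bar>"
      using N dle by (meson order_less_le_trans)
    then show ?thesis using claimA[OF b bd, of "T1 j" j "T2 j" N y] T unfolding K_def by blast
  qed
  define r0 where "r0 = Min (range (\<lambda>i. vR $ i))"
  define r1 where "r1 = Max (range (\<lambda>i. vR $ i))"
  have r0: "r0 > 0" unfolding r0_def using vR_pos by (auto simp: Min_gr_iff)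
  have vRb: "\<forall>i. r0 \<le> vR $ i \<and> vR $ i \<le> r1" unfolding r0_def r1_def by auto
  have r1: "r1 > 0" using vRb[rule_format, of undefined] r0 by linarith
  define c where "c = r0 / (lam ^ N * real CARD('v) * r1)"
  have cpos: "c > 0" unfolding c_def using r0 r1 lam by simp
  define c' where "c' = min c (1/2)"
  have c': "0 < c'" "c' \<le> c" "c' < 1" using cpos by (auto simp: c'_def)
  define f where "f w = (if cyl K w \<inter> F \<noteq> {} then mc w else 0)" for w
  have mcnn: "mc w \<ge> 0" for w
    unfolding mc_def using muc_nonneg[of vL vR lam E lab w] vL_pos vR_pos lam by (simp add: less_imp_le)
  have fnn: "f w \<ge> 0" for w using mcnn by (simp add: f_def)
  have fle: "f w \<le> mc w" for w using mcnn by (simp add: f_def)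
  have step: "(\<Sum>v\<in>Ln A N. f (u @ v)) \<le> (1 - c') * f u" for u
  proof (cases "cyl K u \<inter> F = {}")
    case True
    have sub: "cyl K (u @ v) \<subseteq> cyl K u" for v by (auto simp: cyl_def nth_append)
    have "f (u @ v) = 0" for v
    proof -
      have "cyl K (u @ v) \<inter> F = {}" using sub[of v] True by blast
      then show ?thesis by (simp add: f_def)
    qed
    then show ?thesis using True by (simp add: f_def)
  next
    case False
    define a where "a = vL v* Mword E lab u"
    have "Max (range (\<lambda>l. a $ l)) \<in> range (\<lambda>l. a $ l)" by (rule Max_in) auto
    then obtain j where "a $ j = Max (range (\<lambda>l. a $ l))" by (metis (no_types, lifting) imageE)
    then have j: "\<forall>l. a $ l \<le> a $ j" by simp
    define n where "n = length u"
    define y where "y = \<beta> ^ n * (x - Pw \<beta> u)"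
    obtain v0 k where v0: "length v0 = N" "walk E lab j v0 k"
      "\<not> (\<exists>t'\<in>K. (\<forall>i<N. t' i = v0 ! i) \<and> phi \<beta> t' = y)"
      using cA by blast
    have v0L: "v0 \<in> Ln A N" using walk_letters[OF v0(2)] labA v0(1) by (auto simp: Ln_def)
    have empty: "cyl K (u @ v0) \<inter> F = {}"
    proof (rule ccontr)
      assume "cyl K (u @ v0) \<inter> F \<noteq> {}"
      then obtain t where t: "t \<in> cyl K (u @ v0)" "t \<in> F" by blast
      have tK: "t \<in> K" using t by (simp add: F_def)
      have tu: "t \<in> cyl K u" using t(1) by (auto simp: cyl_def nth_append)
      have shK: "sh n t \<in> K" using sh_K tK unfolding K_def by blast
      have pre: "\<forall>i<N. sh n t i = v0 ! i"
      proof (intro allI impI)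
        fix i assume i: "i < N"
        have "t (i + n) = (u @ v0) ! (i + n)" using t(1) i v0(1) by (auto simp: cyl_def n_def)
        then show "sh n t i = v0 ! i" by (simp add: sh_def nth_append n_def)
      qed
      have bsh: "\<forall>m. \<bar>real_of_int (sh n t m)\<bar> \<le> B" using bd shK unfolding K_def by blast
      have "phi \<beta> t = Pw \<beta> u + phi \<beta> (sh n t) / \<beta> ^ n"
        using phi_conc[OF b bsh, of u] cyl_conc[OF tu] by (simp add: n_def)
      then have "phi \<beta> (sh n t) = y" using t(2) b by (simp add: F_def y_def field_simps)
      then show False using v0(3) shK pre by blast
    qed
    have lower: "c * mc u \<le> mc (u @ v0)"
      using muc_lower[of vL r0 vR r1 lam E lab u j v0 k] vL_pos r0 vRb lam j v0(1,2)
      unfolding c_def mc_def a_def by (simp add: less_imp_le)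
    have "(\<Sum>v\<in>Ln A N. f (u @ v)) = f (u @ v0) + (\<Sum>v\<in>Ln A N - {v0}. f (u @ v))"
      by (rule sum.remove[OF Ln_finite[OF finA] v0L])
    also have "f (u @ v0) = 0" using empty by (simp add: f_def)
    also have "(\<Sum>v\<in>Ln A N - {v0}. f (u @ v)) \<le> (\<Sum>v\<in>Ln A N - {v0}. mc (u @ v))"
      by (rule sum_mono) (rule fle)
    also have "(\<Sum>v\<in>Ln A N - {v0}. mc (u @ v)) = (\<Sum>v\<in>Ln A N. mc (u @ v)) - mc (u @ v0)"
      using sum.remove[OF Ln_finite[OF finA] v0L, of "\<lambda>v. mc (u @ v)"] by simp
    also have "(\<Sum>v\<in>Ln A N. mc (u @ v)) = mc u" unfolding mc_def by (rule muc_sum[OF finA ev lam])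
    finally have le1: "(\<Sum>v\<in>Ln A N. f (u @ v)) \<le> mc u - mc (u @ v0)" by simp
    have "c' * mc u \<le> c * mc u" using c'(2) mcnn[of u] by (rule mult_right_mono)
    then have "mc u - mc (u @ v0) \<le> (1 - c') * mc u" using lower by (simp add: algebra_simps)
    moreover have "mc u = f u" using False by (simp add: f_def)
    ultimately show ?thesis using le1 by simp
  qed
  define T where "T k = (\<Sum>w\<in>Ln A (k * N). f w)" for k
  have Tstep: "T (Suc k) \<le> (1 - c') * T k" for k
  proof -
    have e: "Suc k * N = k * N + N" by simp
    have "T (Suc k) = (\<Sum>u\<in>Ln A (k * N). \<Sum>v\<in>Ln A N. f (u @ v))"
      unfolding T_def e by (rule sum_Ln_add[OF finA])
    also have "\<dots> \<le> (\<Sum>u\<in>Ln A (k * N). (1 - c') * f u)" by (rule sum_mono) (rule step)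
    also have "\<dots> = (1 - c') * T k" by (simp add: T_def sum_distrib_left)
    finally show ?thesis .
  qed
  have mc0: "mc [] = 1" by (simp add: mc_def muc_def Mword_Nil norm)
  have T0: "T 0 \<le> 1" using fle[of "[]"] mc0 by (simp add: T_def Ln_0)
  have Tk: "T k \<le> (1 - c') ^ k" for k
  proof (induction k)
    case 0
    then show ?case using T0 by simp
  next
    case (Suc k)
    have "(1 - c') * T k \<le> (1 - c') * (1 - c') ^ k" using Suc c'(3) by (intro mult_left_mono) auto
    then show ?case using Tstep[of k] by simp
  qed
  have cylsets: "cyl K w \<in> sets \<mu>" for w
    unfolding sets_mu K_def by (rule sigma_sets.Basic) (simp add: cyl_open)
  have Fle: "measure \<mu> F \<le> T k" for k
  proof -
    define W where "W = {w \<in> Ln A (k * N). cyl K w \<inter> F \<noteq> {}}"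
    have finW: "finite W" using Ln_finite[OF finA] by (simp add: W_def)
    have sub: "F \<subseteq> (\<Union>w\<in>W. cyl K w)"
    proof
      fix s assume s: "s \<in> F"
      let ?w = "map s [0..<k * N]"
      have sK: "s \<in> K" using s F_def by simp
      have "set ?w \<subseteq> A" using K_letters[of s E lab] sK labA unfolding K_def by auto
      then have "?w \<in> Ln A (k * N)" by (simp add: Ln_def)
      moreover have "s \<in> cyl K ?w" using sK by (simp add: cyl_def)
      ultimately show "s \<in> (\<Union>w\<in>W. cyl K w)" using s unfolding W_def by blast
    qed
    have "measure \<mu> F \<le> measure \<mu> (\<Union>w\<in>W. cyl K w)"
      by (rule finite_measure_mono[OF sub]) (use finW cylsets in auto)
    also have "\<dots> \<le> (\<Sum>w\<in>W. measure \<mu> (cyl K w))" by (rule measure_UNION_le[OF finW]) (rule cylsets)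
    also have "\<dots> = (\<Sum>w\<in>W. mc w)" using cyl_mu by (simp add: mc_def muc_def K_def)
    also have "\<dots> = T k" unfolding T_def W_def f_def by (simp add: sum.inter_filter[OF Ln_finite[OF finA]])
    finally show ?thesis .
  qed
  show ?thesis
  proof (rule ccontr)
    assume "\<not> ?thesis"
    then have pos: "measure \<mu> F > 0" by (simp add: F_def K_def)
    obtain k where "(1 - c') ^ k < measure \<mu> F" using real_arch_pow_inv[OF pos, of "1 - c'"] c' by auto
    then show False using Fle[of k] Tk[of k] by linarith
  qed
qed

theorem lemma5:
  fixes A :: "int set" and E :: "('v::finite \<times> 'v) set" and lab :: "'v \<times> 'v \<Rightarrow> int"
    and \<beta> lam :: real and vL vR :: "real^'v" and \<mu> :: "(nat \<Rightarrow> int) measure" and x :: real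
  assumes finA: "finite A"
    and labA: "lab ` E \<subseteq> A"
    and prim: "primitive_matrix (Mtot A E lab)"
    and lam_pos: "lam > 0"
    and right_ev: "Mtot A E lab *v vR = lam *\<^sub>R vR"
    and left_ev: "vL v* Mtot A E lab = lam *\<^sub>R vL"
    and vL_pos: "\<forall>i. vL $ i > 0" and vR_pos: "\<forall>i. vR $ i > 0"
    and norm: "vL \<bullet> vR = 1"
    and pis: "pisot \<beta>"
    and prob: "prob_space \<mu>"
    and space_mu: "space \<mu> = Kplus E lab"
    and sets_mu: "sets \<mu> = sigma_sets (Kplus E lab) {U. openin (Ktop (Kplus E lab)) U}"
    and cyl_mu: "\<forall>ws. measure \<mu> (cyl (Kplus E lab) ws)
                   = vL \<bullet> (Mword E lab ws *v vR) / lam ^ length ws"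
    and atom: "measure \<mu> {s \<in> Kplus E lab. phi \<beta> s = x} > 0"
  shows "openin (Ktop (Kplus E lab)) {s \<in> Kplus E lab. phi \<beta> s = x}"
proof -
  have b: "\<beta> > 1" using pis by (simp add: pisot_def)
  define B where "B = (\<Sum>e\<in>E. \<bar>real_of_int (lab e)\<bar>)"
  have bd: "\<forall>t\<in>Kplus E lab. \<forall>n. \<bar>real_of_int (t n)\<bar> \<le> B" unfolding B_def using K_bound by blast
  show ?thesis
  proof (cases "\<exists>j t1 t2. t1 \<in> Kv E lab j \<and> t2 \<in> Kv E lab j \<and> phi \<beta> t1 \<noteq> phi \<beta> t2")
    case True
    then obtain j0 t1 t2 where t: "t1 \<in> Kv E lab j0" "t2 \<in> Kv E lab j0" "phi \<beta> t1 \<noteq> phi \<beta> t2"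
      by blast
    have alln: "\<forall>j. \<exists>t1\<in>Kv E lab j. \<exists>t2\<in>Kv E lab j. phi \<beta> t1 \<noteq> phi \<beta> t2"
      using spread[OF prim b bd t] by blast
    have "measure \<mu> {s \<in> Kplus E lab. phi \<beta> s = x} \<le> 0"
      by (rule null_case[OF finA labA lam_pos right_ev vL_pos vR_pos norm b prob sets_mu cyl_mu bd alln])
    then show ?thesis using atom by linarith
  next
    case False
    have "phi \<beta> ` Kplus E lab \<subseteq> (\<lambda>j. phi \<beta> (SOME t. t \<in> Kv E lab j)) ` UNIV"
    proof
      fix y assume "y \<in> phi \<beta> ` Kplus E lab"
      then obtain s where s: "s \<in> Kplus E lab" "y = phi \<beta> s" by blast
      obtain j where sj: "s \<in> Kv E lab j" using K_Kv[OF s(1)] by blast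
      have "(SOME t. t \<in> Kv E lab j) \<in> Kv E lab j" using sj by (rule someI[where P="\<lambda>t. t \<in> Kv E lab j"])
      then have "y = phi \<beta> (SOME t. t \<in> Kv E lab j)" using False sj s(2) by blast
      then show "y \<in> (\<lambda>j. phi \<beta> (SOME t. t \<in> Kv E lab j)) ` UNIV" by blast
    qed
    then have "finite (phi \<beta> ` Kplus E lab)" by (rule finite_subset) simp
    then show ?thesis by (rule open_case[OF b bd])
  qed
qed

end
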